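(* Let $n\in\mathbb{N}$, $h_0>0$, $h_1,\ldots,h_n\in\mathbb{C}$, and $H(z)\coloneq h_0+2\sum_{k=1}^nh_kz^k$. There is exactly one such polynomial $H$ (for given $h_0$) satisfying all of: $\operatorname{Re}H(z)>0$ for all $z\in\Delta$; $h_n>0$; all $n$ roots of $H$ lie on the unit circle $\{|z|=1\}$. Namely, $H(z)=h_0(1+z^n)$.
   Context: $\Delta=\{z\in\mathbb{C}:|z|<1\}$ is the open unit disk. *)

theory Defs
  imports "HOL-Analysis.Analysis"
begin

definition Hpoly :: "nat \<Rightarrow> real \<Rightarrow> (nat \<Rightarrow> complex) \<Rightarrow> complex \<Rightarrow> complex" where
  "Hpoly n h0 h z = complex_of_real h0 + 2 * (\<Sum>k=1..n. h k * z ^ k)"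

end

theory Submission imports Defs "HOL-Computational_Algebra.Fundamental_Theorem_Algebra" begin

lemma rou_sum:
  fixes n :: nat and d :: int
  assumes n: "n \<ge> 1"
  shows "(\<Sum>j<n. exp (2 * of_real pi * \<i> * of_int d / of_nat n)^j) = (if int n dvd d then of_nat n else 0)"
proof (cases "int n dvd d")
  case True
  then obtain m where m: "d = int n * m" by blast
  have "exp (2 * of_real pi * \<i> * of_int d / of_nat n) = exp (\<i> * (of_int m * (of_real pi * 2)))"
    using n by (intro arg_cong[where f=exp]) (simp add: m field_simps)
  also have "\<dots> = 1" by simp
  finally show ?thesis using True by simp
next
  case False
  define q where "q = exp (2 * of_real pi * \<i> * of_int d / of_nat n)"
  have "q \<noteq> 1"
  proof
    assume "q = 1"
    then obtain k :: int where k: "Im (2 * of_real pi * \<i> * of_int d / of_nat n) = of_int (2*k) * pi"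
      unfolding q_def exp_eq_1 by blast
    have "Im (2 * of_real pi * \<i> * of_int d / of_nat n) = 2*pi* of_int d / of_nat n"
      by (simp add: Im_divide_of_nat)
    with k have "2*pi* of_int d / of_nat n = of_int (2*k) * pi" by simp
    then have "real_of_int d = of_int k * of_nat n" using n by (simp add: field_simps)
    then have "d = k * int n" by (metis of_int_eq_iff of_int_mult of_int_of_nat_eq)
    with False show False by simp
  qed
  have "q ^ n = exp (of_nat n * (2 * of_real pi * \<i> * of_int d / of_nat n))"
    unfolding q_def by (rule exp_of_nat_mult[symmetric])
  also have "\<dots> = exp (\<i> * (of_int d * (of_real pi * 2)))"
    using n by (intro arg_cong[where f=exp]) (simp add: field_simps)
  also have "\<dots> = 1" by simp
  finally have "q ^ n = 1" .
  then show ?thesis using geometric_sum[OF \<open>q \<noteq> 1\<close>, of n] False unfolding q_def by simp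
qed

definition rt :: "nat \<Rightarrow> complex \<Rightarrow> nat \<Rightarrow> complex" where
  "rt n \<xi> j = \<xi> * exp (2 * of_real pi * \<i> * of_nat j / of_nat n)"

lemma rt_norm: "cmod \<xi> = 1 \<Longrightarrow> cmod (rt n \<xi> j) = 1"
  unfolding rt_def by (simp add: norm_mult norm_exp_eq_Re)

lemma rt_term:
  assumes n: "n \<ge> 1"
  shows "rt n \<xi> j ^ a * cnj (rt n \<xi> j) ^ b
     = \<xi>^a * cnj \<xi>^b * exp (2 * of_real pi * \<i> * of_int (int a - int b) / of_nat n) ^ j"
proof -
  define x where "x = 2 * of_real pi * \<i> * of_nat j / (of_nat n :: complex)"
  have cx: "cnj x = - x" unfolding x_def by simp
  have "rt n \<xi> j ^ a * cnj (rt n \<xi> j) ^ b = \<xi>^a * cnj \<xi>^b * (exp x ^ a * exp (cnj x) ^ b)"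
    unfolding rt_def x_def[symmetric] by (simp add: exp_cnj power_mult_distrib)
  also have "exp x ^ a * exp (cnj x) ^ b = exp (of_nat a * x + of_nat b * cnj x)"
    by (simp add: exp_add exp_of_nat_mult)
  also have "\<dots> = exp (of_nat j * (2 * of_real pi * \<i> * of_int (int a - int b) / of_nat n))"
    using n unfolding cx x_def by (intro arg_cong[where f=exp]) (simp add: field_simps)
  also have "\<dots> = exp (2 * of_real pi * \<i> * of_int (int a - int b) / of_nat n) ^ j"
    by (rule exp_of_nat_mult)
  finally show ?thesis .
qed

lemma L1:
  assumes n: "n \<ge> 1"
  shows "(\<Sum>j<n. rt n \<xi> j ^ a * cnj (rt n \<xi> j) ^ b)
     = (if int n dvd (int a - int b) then of_nat n * \<xi>^a * cnj \<xi>^b else 0)"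
  unfolding rt_term[OF n] sum_distrib_left[symmetric] rou_sum[OF n] by simp

lemma L1_0:
  assumes n: "n \<ge> 1"
  shows "(\<Sum>j<n. rt n \<xi> j ^ a) = (if int n dvd int a then of_nat n * \<xi>^a else 0)"
  using L1[OF n, of \<xi> a 0] by simp

lemma G:
  "(\<Sum>j<n. Hpoly n h0 h (rt n \<xi> j) * (rt n \<xi> j ^ c * cnj (rt n \<xi> j) ^ b))
   = h0 * (\<Sum>j<n. rt n \<xi> j ^ c * cnj (rt n \<xi> j) ^ b)
     + 2 * (\<Sum>k=1..n. h k * (\<Sum>j<n. rt n \<xi> j ^ (k + c) * cnj (rt n \<xi> j) ^ b))"
proof -
  have e: "Hpoly n h0 h z * (z^c * w) = h0 * (z^c*w) + 2 * (\<Sum>k=1..n. h k * (z^(k+c) * w))" for z w :: complex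
    unfolding Hpoly_def by (simp add: ring_distribs sum_distrib_right power_add mult.assoc)
  have "(\<Sum>j<n. Hpoly n h0 h (rt n \<xi> j) * (rt n \<xi> j ^ c * cnj (rt n \<xi> j) ^ b))
    = (\<Sum>j<n. h0 * (rt n \<xi> j ^ c * cnj (rt n \<xi> j) ^ b)) + (\<Sum>j<n. 2 * (\<Sum>k=1..n. h k * (rt n \<xi> j ^ (k + c) * cnj (rt n \<xi> j) ^ b)))"
    by (simp only: e sum.distrib)
  also have "\<dots> = h0 * (\<Sum>j<n. rt n \<xi> j ^ c * cnj (rt n \<xi> j) ^ b)
     + 2 * (\<Sum>k=1..n. h k * (\<Sum>j<n. rt n \<xi> j ^ (k + c) * cnj (rt n \<xi> j) ^ b))"
    by (simp add: sum_distrib_left sum.swap[of _ "{..<n}" "{Suc 0..n}"])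
  finally show ?thesis .
qed

lemma dvd_range:
  fixes n x :: nat assumes "n dvd x" "0 < x" "x < 2 * n" shows "x = n"
proof -
  obtain q where q: "x = n * q" using assms(1) by blast
  have "q \<noteq> 0" using q assms(2) by auto
  moreover have "q < 2" using q assms(3) by (metis mult_less_cancel1 mult.commute)
  ultimately have "q = 1" by linarith
  then show ?thesis using q by simp
qed

lemma S1:
  assumes n: "n \<ge> 1" and m: "1 \<le> m" "m < n" and xi: "cmod \<xi> = 1"
  shows "(\<Sum>j<n. Hpoly n h0 h (rt n \<xi> j) * (rt n \<xi> j ^ 0 * cnj (rt n \<xi> j) ^ m)) = 2 * of_nat n * h m"
proof -
  have a: "\<not> int n dvd (int 0 - int m)"
    using nat_dvd_not_less[of m n] m by (simp add: dvd_minus_iff)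
  have b: "int n dvd (int (k + 0) - int m) \<longleftrightarrow> k = m" if "k \<in> {1..n}" for k
  proof
    assume d: "int n dvd (int (k + 0) - int m)"
    show "k = m"
    proof (rule ccontr)
      assume "k \<noteq> m"
      then have "\<bar>int k - int m\<bar> < int n" "int k - int m \<noteq> 0" using that m by auto
      then show False using d dvd_imp_le_int[of "int k - int m" "int n"] by simp
    qed
  qed simp
  have c: "\<xi>^m * cnj \<xi>^m = 1"
  proof -
    have "\<xi> * cnj \<xi> = 1" by (simp only: complex_norm_square[symmetric] xi) simp
    then show ?thesis by (metis power_mult_distrib power_one)
  qed
  have "(\<Sum>k=1..n. h k * (\<Sum>j<n. rt n \<xi> j ^ (k + 0) * cnj (rt n \<xi> j) ^ m))
      = (\<Sum>k=1..n. if k = m then h k * (of_nat n * \<xi>^k * cnj \<xi>^m) else 0)"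
  proof (rule sum.cong)
    fix k assume k: "k \<in> {1..n}"
    show "h k * (\<Sum>j<n. rt n \<xi> j ^ (k + 0) * cnj (rt n \<xi> j) ^ m)
        = (if k = m then h k * (of_nat n * \<xi>^k * cnj \<xi>^m) else 0)"
      by (simp only: L1[OF n] b[OF k]) simp
  qed simp
  also have "\<dots> = h m * of_nat n" using m by (simp add: c mult.assoc)
  finally have k: "(\<Sum>k=1..n. h k * (\<Sum>j<n. rt n \<xi> j ^ (k + 0) * cnj (rt n \<xi> j) ^ m)) = h m * of_nat n" .
  have g: "(\<Sum>j<n. rt n \<xi> j ^ 0 * cnj (rt n \<xi> j) ^ m) = 0"
    by (simp only: L1[OF n] if_not_P[OF a])
  show ?thesis unfolding G g k by simp
qed

lemma S2:
  assumes n: "n \<ge> 1" and m: "1 \<le> m" "m < n"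
  shows "(\<Sum>j<n. Hpoly n h0 h (rt n \<xi> j) * (rt n \<xi> j ^ m * cnj (rt n \<xi> j) ^ 0)) = 2 * of_nat n * h (n - m) * \<xi>^n"
proof -
  have a: "\<not> int n dvd (int m - int 0)"
    using nat_dvd_not_less[of m n] m by simp
  have b: "int n dvd (int (k + m) - int 0) \<longleftrightarrow> k = n - m" if "k \<in> {1..n}" for k
  proof
    assume "int n dvd (int (k + m) - int 0)"
    then have "n dvd (k + m)" by (simp only: of_nat_0 diff_0_right int_dvd_int_iff)
    then have "k + m = n" using dvd_range[of n "k + m"] that m by auto
    then show "k = n - m" by simp
  next
    assume "k = n - m"
    then show "int n dvd (int (k + m) - int 0)" using m by simp
  qed
  have "(\<Sum>k=1..n. h k * (\<Sum>j<n. rt n \<xi> j ^ (k + m) * cnj (rt n \<xi> j) ^ 0))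
      = (\<Sum>k=1..n. if k = n - m then h k * (of_nat n * \<xi>^(k+m) * cnj \<xi>^0) else 0)"
  proof (rule sum.cong)
    fix k assume k: "k \<in> {1..n}"
    show "h k * (\<Sum>j<n. rt n \<xi> j ^ (k + m) * cnj (rt n \<xi> j) ^ 0)
        = (if k = n - m then h k * (of_nat n * \<xi>^(k+m) * cnj \<xi>^0) else 0)"
      by (simp only: L1[OF n] b[OF k]) simp
  qed simp
  also have "\<dots> = h (n - m) * of_nat n * \<xi>^n" using m by simp
  finally have k: "(\<Sum>k=1..n. h k * (\<Sum>j<n. rt n \<xi> j ^ (k + m) * cnj (rt n \<xi> j) ^ 0)) = h (n - m) * of_nat n * \<xi>^n" .
  have g: "(\<Sum>j<n. rt n \<xi> j ^ m * cnj (rt n \<xi> j) ^ 0) = 0"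
    by (simp only: L1[OF n] if_not_P[OF a])
  show ?thesis unfolding G g k by simp
qed

lemma S0:
  assumes n: "n \<ge> 1"
  shows "(\<Sum>j<n. Hpoly n h0 h (rt n \<xi> j) * (rt n \<xi> j ^ 0 * cnj (rt n \<xi> j) ^ 0)) = of_nat n * h0 + 2 * of_nat n * h n * \<xi>^n"
proof -
  have b: "int n dvd (int (k + 0) - int 0) \<longleftrightarrow> k = n" if "k \<in> {1..n}" for k
  proof
    assume "int n dvd (int (k + 0) - int 0)"
    then have "n dvd k" by (simp only: add_0_right of_nat_0 diff_0_right int_dvd_int_iff)
    then show "k = n" using dvd_range[of n k] that by auto
  qed simp
  have "(\<Sum>k=1..n. h k * (\<Sum>j<n. rt n \<xi> j ^ (k + 0) * cnj (rt n \<xi> j) ^ 0))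
      = (\<Sum>k=1..n. if k = n then h k * (of_nat n * \<xi>^(k+0) * cnj \<xi>^0) else 0)"
  proof (rule sum.cong)
    fix k assume k: "k \<in> {1..n}"
    show "h k * (\<Sum>j<n. rt n \<xi> j ^ (k + 0) * cnj (rt n \<xi> j) ^ 0)
        = (if k = n then h k * (of_nat n * \<xi>^(k+0) * cnj \<xi>^0) else 0)"
      by (simp only: L1[OF n] b[OF k]) simp
  qed simp
  also have "\<dots> = h n * of_nat n * \<xi>^n" using n by simp
  finally have k: "(\<Sum>k=1..n. h k * (\<Sum>j<n. rt n \<xi> j ^ (k + 0) * cnj (rt n \<xi> j) ^ 0)) = h n * of_nat n * \<xi>^n" .
  have g: "(\<Sum>j<n. rt n \<xi> j ^ 0 * cnj (rt n \<xi> j) ^ 0) = of_nat n"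
    by (simp only: L1[OF n] if_P[OF dvd_0_right]) simp
  show ?thesis unfolding G g k by simp
qed

lemma ineq:
  assumes n: "n \<ge> 1" and m: "1 \<le> m" "m < n" and xi: "cmod \<xi> = 1"
    and hn: "h n = complex_of_real (h0 / 2)"
    and bd: "\<forall>z. cmod z = 1 \<longrightarrow> Re (Hpoly n h0 h z) \<ge> 0"
  shows "cmod (h m + cnj (h (n - m)) * cnj (\<xi> ^ n)) \<le> h0 * (1 + Re (\<xi> ^ n))"
proof -
  define z where "z = rt n \<xi>"
  define P where "P = Hpoly n h0 h"
  have zn: "cmod (z j) = 1" for j unfolding z_def using rt_norm[OF xi] .
  have t: "complex_of_real (Re (P (z j))) * cnj (z j) ^ m
     = (P (z j) * (z j ^ 0 * cnj (z j) ^ m) + cnj (P (z j) * (z j ^ m * cnj (z j) ^ 0))) / 2" for j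
  proof -
    have "complex_of_real (Re (P (z j))) = (P (z j) + cnj (P (z j))) / 2"
      using complex_add_cnj[of "P (z j)"] by simp
    then have "complex_of_real (Re (P (z j))) * cnj (z j) ^ m = (P (z j) * cnj (z j) ^ m + cnj (P (z j)) * cnj (z j) ^ m) / 2"
      by (metis (no_types) distrib_right times_divide_eq_left)
    then show ?thesis by simp
  qed
  have X: "(\<Sum>j<n. complex_of_real (Re (P (z j))) * cnj (z j) ^ m)
     = of_nat n * (h m + cnj (h (n - m)) * cnj (\<xi> ^ n))"
  proof -
    have "(\<Sum>j<n. complex_of_real (Re (P (z j))) * cnj (z j) ^ m)
       = ((\<Sum>j<n. P (z j) * (z j ^ 0 * cnj (z j) ^ m)) + cnj (\<Sum>j<n. P (z j) * (z j ^ m * cnj (z j) ^ 0))) / 2"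
      unfolding t by (simp only: sum_divide_distrib[symmetric] sum.distrib cnj_sum)
    also have "\<dots> = (2 * of_nat n * h m + cnj (2 * of_nat n * h (n - m) * \<xi>^n)) / 2"
      unfolding z_def P_def S1[OF n m xi] S2[OF n m] ..
    also have "\<dots> = of_nat n * (h m + cnj (h (n - m)) * cnj (\<xi> ^ n))"
      by (simp add: field_simps)
    finally show ?thesis .
  qed
  have "cmod (\<Sum>j<n. complex_of_real (Re (P (z j))) * cnj (z j) ^ m) \<le> (\<Sum>j<n. cmod (complex_of_real (Re (P (z j))) * cnj (z j) ^ m))"
    by (rule norm_sum)
  also have "\<dots> = (\<Sum>j<n. Re (P (z j)))"
    using bd zn unfolding P_def by (intro sum.cong) (auto simp: norm_mult norm_power)
  also have "\<dots> = Re (\<Sum>j<n. P (z j) * (z j ^ 0 * cnj (z j) ^ 0))" by (simp add: Re_sum)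
  also have "\<dots> = Re (of_nat n * h0 + 2 * of_nat n * h n * \<xi>^n)"
    unfolding z_def P_def S0[OF n] by simp
  also have "\<dots> = of_nat n * (h0 * (1 + Re (\<xi> ^ n)))"
    unfolding hn by (simp add: field_simps)
  finally have "of_nat n * cmod (h m + cnj (h (n - m)) * cnj (\<xi> ^ n)) \<le> of_nat n * (h0 * (1 + Re (\<xi> ^ n)))"
    unfolding X by (simp add: norm_mult)
  then show ?thesis using n by simp
qed

lemma nroot:
  assumes n: "n \<ge> 1" and w: "cmod w = 1"
  shows "\<exists>\<xi>. cmod \<xi> = 1 \<and> \<xi> ^ n = w"
proof (intro exI conjI)
  have w0: "w \<noteq> 0" using w by auto
  show "cmod (exp (Ln w / of_nat n)) = 1"
    using w0 w by (simp add: norm_exp_eq_Re Re_divide_of_nat)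
  have "exp (Ln w / of_nat n) ^ n = exp (of_nat n * (Ln w / of_nat n))"
    by (rule exp_of_nat_mult[symmetric])
  also have "\<dots> = w" using n w0 by simp
  finally show "exp (Ln w / of_nat n) ^ n = w" .
qed

lemma zero_coeff:
  assumes h0: "h0 > 0"
    and H: "\<forall>w. cmod w = 1 \<longrightarrow> cmod (a + b * cnj w) \<le> h0 * (1 + Re w)"
  shows "a = 0"
proof (rule ccontr)
  assume a0: "a \<noteq> 0"
  have "cmod (a - b) \<le> 0" using H[rule_format, of "-1"] by simp
  then have ab: "b = a" by simp
  define A where "A = cmod a"
  have A0: "A > 0" using a0 unfolding A_def by simp
  define s where "s = min (1/2) (A / h0)"
  have s0: "s > 0" "s < 1" "s \<le> A / h0" using A0 h0 unfolding s_def by auto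
  define r where "r = sqrt (1 - s^2)"
  have "s^2 \<le> 1" using s0 by (intro power_le_one) auto
  then have r2: "r^2 = 1 - s^2" unfolding r_def by simp
  have "s^2 \<le> 1" using s0 by (intro power_le_one) auto
  have r0: "r \<ge> 0" "r < 1" unfolding r_def using s0 \<open>s^2 \<le> 1\<close> by auto
  have rs: "1 - r \<le> s^2"
  proof -
    have "r^2 \<le> r" using r0 by (simp add: power2_eq_square mult_le_cancel_right1 mult_left_le_one_le)
    then show ?thesis using r2 by simp
  qed
  define w where "w = Complex (-r) s"
  have wn: "cmod w = 1" unfolding w_def cmod_def using r2 by simp
  have "a + b * cnj w = a * Complex (1 - r) (-s)"
    unfolding ab w_def by (simp add: complex_eq_iff algebra_simps)
  then have "cmod (a * Complex (1 - r) (-s)) \<le> h0 * (1 - r)"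
    using H[rule_format, OF wn] unfolding w_def by simp
  then have "A * sqrt ((1 - r)^2 + s^2) \<le> h0 * (1 - r)"
    unfolding A_def norm_mult complex_norm by simp
  moreover have "(1 - r)^2 + s^2 = 2 * (1 - r)" using r2 by (simp add: power2_eq_square algebra_simps)
  ultimately have "A * sqrt (2 * (1 - r)) \<le> h0 * (1 - r)" by simp
  then have "(A * sqrt (2 * (1 - r)))^2 \<le> (h0 * (1 - r))^2"
    using A0 r0 by (intro power_mono) auto
  then have "A^2 * (2 * (1 - r)) \<le> h0^2 * (1 - r)^2"
    using r0 by (simp add: power_mult_distrib)
  then have "(2 * A^2) * (1 - r) \<le> (h0^2 * (1 - r)) * (1 - r)"
    by (simp add: power2_eq_square algebra_simps)
  then have "2 * A^2 \<le> h0^2 * (1 - r)"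
    by (rule mult_right_le_imp_le) (use r0 in simp)
  also have "\<dots> \<le> h0^2 * s^2" using rs by (simp add: mult_left_mono)
  also have "\<dots> \<le> h0^2 * (A / h0)^2" using s0 by (intro mult_left_mono power_mono) auto
  also have "\<dots> = A^2" using h0 by (simp add: field_simps)
  finally show False using A0 by simp
qed

definition Hp :: "nat \<Rightarrow> real \<Rightarrow> (nat \<Rightarrow> complex) \<Rightarrow> complex poly" where
  "Hp n h0 h = (\<Sum>k\<le>n. monom (if k = 0 then complex_of_real h0 else 2 * h k) k)"

lemma poly_Hp: "poly (Hp n h0 h) z = Hpoly n h0 h z"
proof -
  have "poly (Hp n h0 h) z = (\<Sum>k\<in>{0..n}. (if k = 0 then complex_of_real h0 else 2 * h k) * z ^ k)"
    unfolding Hp_def by (simp add: poly_sum poly_monom atMost_atLeast0)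
  also have "\<dots> = complex_of_real h0 + (\<Sum>k\<in>{Suc 0..n}. (if k = 0 then complex_of_real h0 else 2 * h k) * z ^ k)"
    by (subst sum.atLeast_Suc_atMost) auto
  also have "(\<Sum>k\<in>{Suc 0..n}. (if k = 0 then complex_of_real h0 else 2 * h k) * z ^ k) = 2 * (\<Sum>k=1..n. h k * z ^ k)"
    by (simp add: sum_distrib_left mult.assoc)
  finally show ?thesis unfolding Hpoly_def by simp
qed

lemma coeff_Hp: "coeff (Hp n h0 h) k = (if k \<le> n then (if k = 0 then complex_of_real h0 else 2 * h k) else 0)"
  unfolding Hp_def by (simp add: coeff_sum coeff_monom)

lemma hn_half:
  assumes n: "n \<ge> 1" and h0: "h0 > 0" and im: "Im (h n) = 0" and re: "Re (h n) > 0"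
    and roots: "\<forall>z. Hpoly n h0 h z = 0 \<longrightarrow> cmod z = 1"
  shows "h n = complex_of_real (h0 / 2)"
proof -
  define p where "p = Hp n h0 h"
  have hn0: "h n \<noteq> 0" using re by auto
  have cn: "coeff p n = 2 * h n" unfolding p_def coeff_Hp using n by simp
  have deg: "degree p = n"
  proof (rule antisym)
    show "degree p \<le> n" by (rule degree_le) (simp add: p_def coeff_Hp)
    show "n \<le> degree p" by (rule le_degree) (simp add: cn hn0)
  qed
  have lc: "lead_coeff p = 2 * h n" using deg cn by simp
  obtain root where r: "smult (lead_coeff p) (\<Prod>i<degree p. [:-root i, 1:]) = p"
    by (rule complex_poly_decompose')
  have pr: "poly p z = 2 * h n * (\<Prod>i<n. z - root i)" for z
    using arg_cong[OF r, of "\<lambda>q. poly q z"] by (simp add: poly_prod lc deg cn)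
  have rn: "cmod (root i) = 1" if "i < n" for i
  proof -
    have "poly p (root i) = 0" unfolding pr using that by (auto intro: prod_zero)
    then show ?thesis using roots unfolding p_def poly_Hp by blast
  qed
  have "complex_of_real h0 = poly p 0" unfolding p_def poly_Hp Hpoly_def by simp
  also have "\<dots> = 2 * h n * (\<Prod>i<n. - root i)" unfolding pr by simp
  finally have e: "complex_of_real h0 = 2 * h n * (\<Prod>i<n. - root i)" .
  have "cmod (\<Prod>i<n. - root i) = (\<Prod>i<n. cmod (- root i))" by (rule prod_norm[symmetric])
  also have "\<dots> = 1" using rn by simp
  finally have "cmod (complex_of_real h0) = cmod (2 * h n)" unfolding e norm_mult by simp
  then have "h0 = 2 * cmod (h n)" using h0 by (simp add: norm_mult)
  moreover have "cmod (h n) = Re (h n)" using im re by (simp add: cmod_def)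
  ultimately show ?thesis using im by (simp add: complex_eq_iff)
qed

lemma boundary:
  assumes A: "\<forall>z. cmod z < 1 \<longrightarrow> Re (Hpoly n h0 h z) > 0"
  shows "\<forall>z. cmod z = 1 \<longrightarrow> Re (Hpoly n h0 h z) \<ge> 0"
proof -
  have cont: "continuous_on UNIV (\<lambda>z. Re (Hpoly n h0 h z))"
    unfolding Hpoly_def by (intro continuous_intros)
  have cl: "closed {z. (\<lambda>_. 0) z \<le> Re (Hpoly n h0 h z)}"
    by (rule closed_Collect_le[OF continuous_on_const cont])
  have "ball 0 1 \<subseteq> {z. (\<lambda>_. 0) z \<le> Re (Hpoly n h0 h z)}"
    using A by (auto simp: less_imp_le)
  then have "closure (ball (0::complex) 1) \<subseteq> {z. (\<lambda>_. 0) z \<le> Re (Hpoly n h0 h z)}"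
    using cl by (rule closure_minimal)
  then show ?thesis by (auto simp: subset_eq mem_cball_0)
qed

theorem mainTheorem5:
  fixes n :: nat and h0 :: real and h :: "nat \<Rightarrow> complex"
  assumes "n \<ge> 1" and "h0 > 0"
  shows "((\<forall>z. cmod z < 1 \<longrightarrow> Re (Hpoly n h0 h z) > 0)
          \<and> Im (h n) = 0 \<and> Re (h n) > 0
          \<and> (\<forall>z. Hpoly n h0 h z = 0 \<longrightarrow> cmod z = 1))
       \<longleftrightarrow> (\<forall>z. Hpoly n h0 h z = complex_of_real h0 * (1 + z ^ n))"
proof
  assume H: "(\<forall>z. cmod z < 1 \<longrightarrow> Re (Hpoly n h0 h z) > 0)
          \<and> Im (h n) = 0 \<and> Re (h n) > 0
          \<and> (\<forall>z. Hpoly n h0 h z = 0 \<longrightarrow> cmod z = 1)"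
  have hn: "h n = complex_of_real (h0 / 2)" using hn_half[OF assms] H by blast
  have bd: "\<forall>z. cmod z = 1 \<longrightarrow> Re (Hpoly n h0 h z) \<ge> 0" using boundary H by blast
  have hm: "h m = 0" if m: "1 \<le> m" "m < n" for m
  proof (rule zero_coeff[OF assms(2)], intro allI impI)
    fix w :: complex assume w: "cmod w = 1"
    obtain \<xi> where xi: "cmod \<xi> = 1" "\<xi> ^ n = w" using nroot[OF assms(1) w] by blast
    show "cmod (h m + cnj (h (n - m)) * cnj w) \<le> h0 * (1 + Re w)"
      using ineq[OF assms(1) m xi(1) hn bd] xi(2) by simp
  qed
  show "\<forall>z. Hpoly n h0 h z = complex_of_real h0 * (1 + z ^ n)"
  proof
    fix z :: complex
    have "(\<Sum>k=1..n. h k * z ^ k) = (\<Sum>k=1..n. if k = n then h n * z ^ n else 0)"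
      by (rule sum.cong) (auto simp: hm)
    also have "\<dots> = h n * z ^ n" using assms(1) by simp
    finally show "Hpoly n h0 h z = complex_of_real h0 * (1 + z ^ n)"
      unfolding Hpoly_def hn by (simp add: algebra_simps)
  qed
next
  assume E: "\<forall>z. Hpoly n h0 h z = complex_of_real h0 * (1 + z ^ n)"
  define q where "q = [:complex_of_real h0:] + monom (complex_of_real h0) n"
  have "poly (Hp n h0 h) = poly q"
    using E by (auto simp: poly_Hp q_def poly_monom algebra_simps)
  then have pq: "Hp n h0 h = q" by (simp add: poly_eq_poly_eq_iff)
  have ck: "coeff (Hp n h0 h) k = coeff q k" for k using pq by simp
  have hn: "2 * h n = complex_of_real h0" using ck[of n] assms(1) by (simp add: coeff_Hp q_def coeff_monom coeff_pCons split: nat.split)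
  then have hn': "h n = complex_of_real (h0 / 2)" by (simp add: field_simps)
  have disk: "Re (Hpoly n h0 h z) > 0" if "cmod z < 1" for z
  proof -
    have "\<bar>Re (z ^ n)\<bar> \<le> cmod (z ^ n)" by (rule abs_Re_le_cmod)
    also have "\<dots> = cmod z ^ n" by (simp add: norm_power)
    also have "\<dots> < 1" using that assms(1) by (simp add: power_less_one_iff)
    finally have "1 + Re (z ^ n) > 0" by linarith
    then show ?thesis using assms(2) by (simp add: E)
  qed
  have rt: "cmod z = 1" if "Hpoly n h0 h z = 0" for z
  proof -
    have "1 + z ^ n = 0" using that assms(2) by (simp add: E)
    then have "z ^ n = -1" by (simp add: add_eq_0_iff)
    then have "cmod z ^ n = 1" by (metis norm_minus_cancel norm_one norm_power)
    then show ?thesis using assms(1) power_eq_imp_eq_base[of "cmod z" n 1] by simp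
  qed
  have ih: "Im (h n) = 0" "Re (h n) > 0" unfolding hn' using assms(2) by simp_all
  show "(\<forall>z. cmod z < 1 \<longrightarrow> Re (Hpoly n h0 h z) > 0)
          \<and> Im (h n) = 0 \<and> Re (h n) > 0
          \<and> (\<forall>z. Hpoly n h0 h z = 0 \<longrightarrow> cmod z = 1)"
    using disk rt ih by blast
qed

end
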